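(* Let $\mathcal{G}_1=\{(Q,\lambda)\in\mathsf{Sp}(n-1,\omega)\times\mathbb{R}_+:\dim\ker(Q-\lambda\,\mathrm{Id})=1\}$ and $\mathcal{G}_0=\{(Q,1)\in\mathcal{G}_1\}$. Then the projection $\pi\colon\mathcal{G}_1\to\mathbb{R}$, $\pi(Q,\lambda)=\lambda$, is a submersion around $\mathcal{G}_0$.
   Context: $\omega$ is the standard symplectic form on $\mathbb{R}^{2(n-1)}$, $\mathsf{Sp}(n-1,\omega)$ the real symplectic group, $\mathbb{R}_+=(0,\infty)$. $\mathcal{G}_1$ is a smooth hypersurface of the open set $\mathcal{G}=\{(Q,\lambda):\dim\ker(Q-\lambda\,\mathrm{Id})\le1\}\subseteq\mathsf{Sp}(n-1,\omega)\times\mathbb{R}_+$, being the zero set of $(Q,\lambda)\mapsto\det(Q-\lambda\,\mathrm{Id})$, which is a submersion near $\mathcal{G}_1$. *)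

theory Defs
  imports "HOL-Analysis.Analysis"
begin

text \<open>Phase space R^(2(n-1)) is modelled as real^('k + 'k), with n - 1 = CARD('k).
  Coordinates Inl i are the q_i, coordinates Inr i are the p_i.\<close>

type_synonym 'k phase = "real ^ ('k + 'k)"
type_synonym 'k pmat = "real ^ ('k + 'k) ^ ('k + 'k)"

definition omega_std :: "'k::finite phase \<Rightarrow> 'k phase \<Rightarrow> real" where
  "omega_std x y = (\<Sum>i\<in>UNIV. x $ Inl i * y $ Inr i - x $ Inr i * y $ Inl i)"

definition symplectic :: "'k::finite pmat \<Rightarrow> bool" where
  "symplectic Q \<longleftrightarrow> (\<forall>x y. omega_std (Q *v x) (Q *v y) = omega_std x y)"

definition G1 :: "('k::finite pmat \<times> real) set" where
  "G1 = {(Q, l). symplectic Q \<and> l > 0 \<and>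
          dim {x. (Q - l *\<^sub>R mat 1) *v x = 0} = 1}"

definition G0 :: "('k::finite pmat \<times> real) set" where
  "G0 = {p \<in> G1. snd p = 1}"

text \<open>Tangent vectors of a subset S of a normed space at p: velocities at 0 of
  curves lying in S near 0 and passing through p (tangent space of an embedded
  submanifold).\<close>
definition tangent_vectors :: "'a::real_normed_vector set \<Rightarrow> 'a \<Rightarrow> 'a set" where
  "tangent_vectors S p = {v. \<exists>\<gamma> e. e > 0 \<and> \<gamma> 0 = p \<and> (\<forall>t\<in>{-e<..<e}. \<gamma> t \<in> S) \<and>
                                  (\<gamma> has_vector_derivative v) (at 0)}"

definition proj_submersion_at :: "('a::real_normed_vector \<times> real) set \<Rightarrow> 'a \<times> real \<Rightarrow> bool" where
  "proj_submersion_at S p \<longleftrightarrow> snd ` tangent_vectors S p = UNIV"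

end

theory Submission imports Defs begin

lemma ker_subspace: "subspace {z. (M::real^'n^'m) *v z = 0}"
  by (auto simp: subspace_def matrix_vector_right_distrib matrix_vector_mult_scaleR)

lemma nonzero_of_dim: "dim (S::'a::euclidean_space set) \<noteq> 0 \<Longrightarrow> \<exists>x\<in>S. x \<noteq> 0"
proof (rule ccontr)
  assume a: "dim S \<noteq> 0" "\<not> (\<exists>x\<in>S. x \<noteq> 0)"
  then have "S \<subseteq> {0}" by blast
  then show False using a(1) by simp
qed

lemma ker_stable:
  fixes M0 C D :: "real^'n^'n"
  assumes d: "dim {z. M0 *v z = 0} = 1"
  shows "\<exists>e>0. \<forall>a b. \<bar>a\<bar> < e \<and> \<bar>b\<bar> < e \<longrightarrow> dim {z. (M0 + a *\<^sub>R C + b *\<^sub>R D) *v z = 0} \<le> 1"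
proof -
  obtain x where x0: "x \<noteq> 0" and xk: "M0 *v x = 0"
    using nonzero_of_dim[of "{z. M0 *v z = 0}"] d by auto
  define V where "V = {z. x \<bullet> z = 0}"
  have Vs: "subspace V" unfolding V_def by (rule subspace_hyperplane)
  have Vc: "closed V" unfolding V_def by (rule closed_hyperplane)
  have inj: "\<forall>z\<in>V. M0 *v z = 0 \<longrightarrow> z = 0"
  proof (intro ballI impI, rule ccontr)
    fix z assume zV: "z \<in> V" and zk: "M0 *v z = 0" and z0: "z \<noteq> 0"
    have xz0: "x \<bullet> z = 0" using zV by (simp add: V_def)
    have xz: "x \<noteq> z" using xz0 x0 by auto
    have po: "pairwise orthogonal {x, z}"
      using xz0 by (simp add: pairwise_insert orthogonal_def inner_commute)
    have "0 \<notin> {x, z}" using x0 z0 by simp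
    then have "independent {x, z}" using pairwise_orthogonal_independent[OF po] by simp
    moreover have "{x, z} \<subseteq> {z. M0 *v z = 0}" using xk zk by simp
    ultimately have "card {x, z} \<le> dim {z. M0 *v z = 0}"
      using independent_card_le_dim by blast
    then show False using d xz by simp
  qed
  obtain m where m: "m > 0" "\<forall>z\<in>V. norm (M0 *v z) \<ge> m * norm z"
    using injective_imp_isometric[OF Vc Vs matrix_vector_mul_bounded_linear inj] by blast
  obtain BC where BC: "BC > 0" "\<And>z. norm (C *v z) \<le> norm z * BC"
    using bounded_linear.pos_bounded[OF matrix_vector_mul_bounded_linear[of C]] by blast
  obtain BD where BD: "BD > 0" "\<And>z. norm (D *v z) \<le> norm z * BD"
    using bounded_linear.pos_bounded[OF matrix_vector_mul_bounded_linear[of D]] by blast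
  define e where "e = m / (BC + BD)"
  have e: "e > 0" using m BC BD by (simp add: e_def)
  show ?thesis
  proof (intro exI[of _ e] conjI e allI impI)
    fix a b assume ab: "\<bar>a\<bar> < e \<and> \<bar>b\<bar> < e"
    define K where "K = {z. (M0 + a *\<^sub>R C + b *\<^sub>R D) *v z = 0}"
    show "dim K \<le> 1"
    proof (rule ccontr)
      assume "\<not> dim K \<le> 1"
      hence K2: "dim K \<ge> 2" by simp
      have Ks: "subspace K" unfolding K_def by (rule ker_subspace)
      have h1: "dim {u + v |u v. u \<in> K \<and> v \<in> V} + dim (K \<inter> V) = dim K + dim V"
        by (rule dim_sums_Int[OF Ks Vs])
      have h2: "dim {u + v |u v. u \<in> K \<and> v \<in> V} \<le> CARD('n)"
        by (rule dim_subset_UNIV_cart)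
      have h3: "dim V = CARD('n) - 1" unfolding V_def using dim_hyperplane[OF x0] by simp
      have h4: "CARD('n) \<ge> 1" by (simp add: Suc_le_eq)
      have "dim (K \<inter> V) \<noteq> 0" using K2 h1 h2 h3 h4 by linarith
      then obtain z where zKV: "z \<in> K \<inter> V" and z0: "z \<noteq> 0"
        using nonzero_of_dim by blast
      have zK: "(M0 + a *\<^sub>R C + b *\<^sub>R D) *v z = 0" using zKV by (simp add: K_def)
      have zV: "z \<in> V" using zKV by simp
      have eq: "M0 *v z = - (a *\<^sub>R (C *v z) + b *\<^sub>R (D *v z))"
      proof -
        have "M0 *v z + (a *\<^sub>R (C *v z) + b *\<^sub>R (D *v z)) = 0"
          using zK by (simp add: matrix_vector_mult_add_rdistrib scaleR_matrix_vector_assoc[symmetric] add.assoc)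
        then show ?thesis by (simp only: eq_neg_iff_add_eq_0)
      qed
      have n1: "norm (a *\<^sub>R (C *v z)) \<le> \<bar>a\<bar> * (norm z * BC)"
        using BC(2)[of z] by (simp add: mult_left_mono)
      have n2: "norm (b *\<^sub>R (D *v z)) \<le> \<bar>b\<bar> * (norm z * BD)"
        using BD(2)[of z] by (simp add: mult_left_mono)
      have "norm (M0 *v z) \<le> \<bar>a\<bar> * (norm z * BC) + \<bar>b\<bar> * (norm z * BD)"
        unfolding eq norm_minus_cancel using norm_triangle_ineq[of "a *\<^sub>R (C *v z)" "b *\<^sub>R (D *v z)"] n1 n2
        by linarith
      also have "\<dots> < e * (norm z * BC) + e * (norm z * BD)"
      proof -
        have nz: "norm z * BC > 0" "norm z * BD > 0" using z0 BC BD by auto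
        show ?thesis using ab nz by (intro add_strict_mono mult_strict_right_mono) auto
      qed
      also have "\<dots> = e * (BC + BD) * norm z" by (simp add: algebra_simps)
      also have "\<dots> = m * norm z" using BC(1) BD(1) by (simp add: e_def)
      finally have lt: "norm (M0 *v z) < m * norm z" .
      have "m * norm z \<le> norm (M0 *v z)" using m(2) zV by blast
      then show False using lt by linarith
    qed
  qed
qed

lemma om_add_l[simp]: "omega_std (a + b) c = omega_std a c + omega_std b c"
  unfolding omega_std_def sum.distrib[symmetric] by (rule sum.cong) (simp_all add: algebra_simps)
lemma om_add_r[simp]: "omega_std c (a + b) = omega_std c a + omega_std c b"
  unfolding omega_std_def sum.distrib[symmetric] by (rule sum.cong) (simp_all add: algebra_simps)
lemma om_scale_l[simp]: "omega_std (r *\<^sub>R a) c = r * omega_std a c"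
  unfolding omega_std_def sum_distrib_left by (rule sum.cong) (simp_all add: algebra_simps)
lemma om_scale_r[simp]: "omega_std c (r *\<^sub>R a) = r * omega_std c a"
  unfolding omega_std_def sum_distrib_left by (rule sum.cong) (simp_all add: algebra_simps)
lemma om_anti: "omega_std a b = - omega_std b a"
  unfolding omega_std_def sum_negf[symmetric] by (rule sum.cong) (simp_all add: algebra_simps)
lemma om_self[simp]: "omega_std a a = 0"
  using om_anti[of a a] by simp

definition Sm :: "real \<Rightarrow> 'k::finite phase \<Rightarrow> 'k phase \<Rightarrow> 'k phase \<Rightarrow> 'k phase" where
  "Sm s x y z = z + (s * omega_std z y) *\<^sub>R x + ((1/(1+s) - 1) * omega_std x z) *\<^sub>R y"

lemma Sm_sympl:
  assumes "omega_std x y = 1" "1 + s \<noteq> 0"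
  shows "omega_std (Sm s x y z) (Sm s x y w) = omega_std z w"
proof -
  have yx: "omega_std y x = -1" using om_anti[of y x] assms by simp
  have zx: "omega_std z x = - omega_std x z" "omega_std w x = - omega_std x w" by (rule om_anti)+
  have yz: "omega_std y z = - omega_std z y" "omega_std y w = - omega_std w y" by (rule om_anti)+
  define q where "q = 1/(1+s) - 1"
  have q: "s + q + s * q = 0" using assms(2) by (simp add: q_def field_simps)
  have "omega_std (Sm s x y z) (Sm s x y w) = omega_std z w
     + (s + q + s*q) * (omega_std z y * omega_std x w - omega_std w y * omega_std x z)"
    unfolding Sm_def q_def[symmetric] by (simp add: assms yx zx yz algebra_simps)
  then show ?thesis using q by simp
qed

lemma lin1: "linear (\<lambda>z. omega_std z y *\<^sub>R (x::'k::finite phase))"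
  by (rule linearI) (auto simp: algebra_simps)
lemma lin2: "linear (\<lambda>z. omega_std x z *\<^sub>R (y::'k::finite phase))"
  by (rule linearI) (auto simp: algebra_simps)

lemma exists_y:
  fixes x :: "'k::finite phase"
  assumes "x \<noteq> 0"
  shows "\<exists>y. omega_std x y = 1"
proof -
  define y0 :: "'k phase" where "y0 = (\<chi> j. case j of Inl i \<Rightarrow> - x $ Inr i | Inr i \<Rightarrow> x $ Inl i)"
  have eq: "omega_std x y0 = (\<Sum>i\<in>UNIV. (x $ Inl i)^2 + (x $ Inr i)^2)"
    unfolding omega_std_def y0_def by (simp add: power2_eq_square)
  obtain j where j: "x $ j \<noteq> 0" using assms by (metis vec_eq_iff zero_index)
  have "\<exists>i. (x $ Inl i)^2 + (x $ Inr i)^2 > 0"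
  proof (cases j)
    case (Inl i) then show ?thesis using j by (intro exI[of _ i]) (simp add: add_pos_nonneg)
  next
    case (Inr i) then show ?thesis using j by (intro exI[of _ i]) (simp add: add_nonneg_pos)
  qed
  then obtain i where "(x $ Inl i)^2 + (x $ Inr i)^2 > 0" by blast
  then have pos: "omega_std x y0 > 0" unfolding eq
    by (intro sum_pos2[where i=i]) auto
  show ?thesis by (intro exI[of _ "(1 / omega_std x y0) *\<^sub>R y0"]) (use pos in simp)
qed

theorem lemmaA6:
  shows "\<exists>U. open U \<and> (G0 :: ('k::finite pmat \<times> real) set) \<subseteq> U \<and>
             (\<forall>p \<in> (G1 :: ('k pmat \<times> real) set) \<inter> U. proj_submersion_at G1 p)"
proof (intro exI[of _ UNIV] conjI ballI)
  fix p :: "'k pmat \<times> real"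
  assume "p \<in> G1 \<inter> UNIV"
  then have pG: "p \<in> G1" by simp
  obtain Q l where p: "p = (Q, l)" by (cases p)
  have "(Q, l) \<in> G1" using pG p by simp
  then have sQ: "symplectic Q" and l: "l > 0"
    and d: "dim {x. (Q - l *\<^sub>R mat 1) *v x = 0} = 1"
    unfolding G1_def by simp_all
  obtain x where x0: "x \<noteq> 0" and xk: "(Q - l *\<^sub>R mat 1) *v x = 0"
    using nonzero_of_dim[of "{z. (Q - l *\<^sub>R mat 1) *v z = 0}"] d by auto
  have Qx: "Q *v x = l *\<^sub>R x" using xk
    by (simp add: matrix_vector_mult_diff_rdistrib scaleR_matrix_vector_assoc[symmetric])
  obtain y where xy: "omega_std x y = 1" using exists_y[OF x0] by blast
  define A :: "'k pmat" where "A = matrix (\<lambda>z. omega_std z y *\<^sub>R x)"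
  define B :: "'k pmat" where "B = matrix (\<lambda>z. omega_std x z *\<^sub>R y)"
  have Av: "A *v z = omega_std z y *\<^sub>R x" for z
    unfolding A_def using fun_cong[OF matrix_vector_mul(2)[OF lin1[where x=x and y=y]], of z] by simp
  have Bv: "B *v z = omega_std x z *\<^sub>R y" for z
    unfolding B_def using fun_cong[OF matrix_vector_mul(2)[OF lin2[where x=x and y=y]], of z] by simp
  define qf :: "real \<Rightarrow> real" where "qf s = 1/(1+s) - 1" for s
  define g1 where "g1 s = Q + s *\<^sub>R (A ** Q) + qf s *\<^sub>R (B ** Q)" for s
  have g1v: "g1 s *v z = Sm s x y (Q *v z)" for s z
    unfolding g1_def Sm_def qf_def
    by (simp add: matrix_vector_mult_add_rdistrib scaleR_matrix_vector_assoc[symmetric]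
        matrix_vector_mul_assoc[symmetric] Av Bv)
  have g1M: "g1 s - ((1+s)*l) *\<^sub>R mat 1 = (Q - l *\<^sub>R mat 1) + s *\<^sub>R (A ** Q - l *\<^sub>R mat 1) + qf s *\<^sub>R (B ** Q)" for s
    unfolding g1_def by (simp add: algebra_simps)
  obtain e0 where e0: "e0 > 0" and e0b': "\<forall>a b. \<bar>a\<bar> < e0 \<and> \<bar>b\<bar> < e0 \<longrightarrow>
      dim {z. ((Q - l *\<^sub>R mat 1) + a *\<^sub>R (A ** Q - l *\<^sub>R mat 1) + b *\<^sub>R (B ** Q)) *v z = 0} \<le> 1"
    using ker_stable[OF d, of "A ** Q - l *\<^sub>R mat 1" "B ** Q"] by blast
  have e0b: "dim {z. ((Q - l *\<^sub>R mat 1) + a *\<^sub>R (A ** Q - l *\<^sub>R mat 1) + b *\<^sub>R (B ** Q)) *v z = 0} \<le> 1"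
    if "\<bar>a\<bar> < e0" "\<bar>b\<bar> < e0" for a b using e0b' that by blast
  have inG1: "(g1 s, (1+s)*l) \<in> G1" if s: "\<bar>s\<bar> < min (e0/2) (1/2)" for s
  proof -
    have s1: "1 + s > 0" using s by auto
    have "\<bar>qf s\<bar> = \<bar>s\<bar> / (1+s)" using s1 by (simp add: qf_def field_simps abs_div)
    also have "\<dots> \<le> 2 * \<bar>s\<bar>"
    proof -
      have h: "1 \<le> 2*(1+s)" using s by auto
      have "\<bar>s\<bar> * 1 \<le> \<bar>s\<bar> * (2*(1+s))" by (rule mult_left_mono[OF h]) simp
      then show ?thesis using s1 by (simp add: divide_le_eq mult_ac)
    qed
    also have "\<dots> < e0" using s by auto
    finally have qs: "\<bar>qf s\<bar> < e0" .
    have le: "dim {z. (g1 s - ((1+s)*l) *\<^sub>R mat 1) *v z = 0} \<le> 1"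
    proof -
      have "\<bar>s\<bar> < e0" using s e0 by linarith
      then show ?thesis unfolding g1M by (rule e0b[OF _ qs])
    qed
    have "(g1 s - ((1+s)*l) *\<^sub>R mat 1) *v x = 0"
      by (simp add: matrix_vector_mult_diff_rdistrib scaleR_matrix_vector_assoc[symmetric] g1v Qx Sm_def xy algebra_simps)
    then have "\<not> {z. (g1 s - ((1+s)*l) *\<^sub>R mat 1) *v z = 0} \<subseteq> {0}" using x0 by auto
    then have "dim {z. (g1 s - ((1+s)*l) *\<^sub>R mat 1) *v z = 0} \<noteq> 0" by simp
    with le have dd: "dim {z. (g1 s - ((1+s)*l) *\<^sub>R mat 1) *v z = 0} = 1" by linarith
    have sy: "symplectic (g1 s)"
      unfolding symplectic_def g1v using Sm_sympl[OF xy] s1 sQ by (simp add: symplectic_def)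
    show ?thesis unfolding G1_def using sy dd s1 l by simp
  qed
  show "proj_submersion_at G1 p"
    unfolding proj_submersion_at_def
  proof (intro set_eqI iffI)
    fix w :: real
    define r where "r = w / l"
    define c where "c = min (e0/2) (1/2)"
    define e where "e = c / (\<bar>r\<bar> + 1)"
    have c: "c > 0" using e0 by (simp add: c_def)
    have e: "e > 0" using c by (simp add: e_def)
    define \<gamma> where "\<gamma> t = (g1 (r*t), (1 + r*t)*l)" for t
    have "\<gamma> 0 = p" by (simp add: \<gamma>_def p g1_def qf_def)
    moreover have "\<forall>t\<in>{-e<..<e}. \<gamma> t \<in> G1"
    proof
      fix t assume "t \<in> {-e<..<e}"
      then have "\<bar>t\<bar> < e" by auto
      then have "\<bar>r*t\<bar> \<le> \<bar>r\<bar> * e" by (simp add: abs_mult mult_left_mono)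
      also have "\<dots> < c" using c by (simp add: e_def field_simps)
      finally have "\<bar>r*t\<bar> < min (e0/2) (1/2)" unfolding c_def .
      then show "\<gamma> t \<in> G1" unfolding \<gamma>_def by (rule inG1)
    qed
    moreover have "(\<gamma> has_vector_derivative (r *\<^sub>R (A ** Q) + (-r) *\<^sub>R (B ** Q), r * l)) (at 0)"
    proof -
      have q: "((\<lambda>t. qf (r*t)) has_real_derivative -r) (at 0)"
        unfolding qf_def by (auto intro!: derivative_eq_intros)
      have 1: "((\<lambda>t. g1 (r*t)) has_vector_derivative (r *\<^sub>R (A ** Q) + (-r) *\<^sub>R (B ** Q))) (at 0)"
        unfolding g1_def
        using q by (auto intro!: derivative_eq_intros simp: has_vector_derivative_def has_field_derivative_def) (simp add: fun_eq_iff algebra_simps)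
      have 2: "((\<lambda>t. (1 + r*t)*l) has_vector_derivative r * l) (at 0)"
        by (auto intro!: derivative_eq_intros simp: has_vector_derivative_def)
      show ?thesis unfolding \<gamma>_def by (rule has_vector_derivative_Pair[OF 1 2])
    qed
    ultimately have "(r *\<^sub>R (A ** Q) + (-r) *\<^sub>R (B ** Q), r * l) \<in> tangent_vectors G1 p"
      unfolding tangent_vectors_def mem_Collect_eq
      by (intro exI[of _ \<gamma>] exI[of _ e] conjI) (use e in simp_all)
    moreover have "r * l = w" using l by (simp add: r_def)
    ultimately show "w \<in> snd ` tangent_vectors G1 p" by (metis snd_conv image_eqI)
  qed simp
qed simp_all

end
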